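(* Let $G=(V,T,P,S)$ be a context-free grammar, let $W\subseteq V$, and let $F\subseteq W^*$ be a regular language. Then the language $L(G,F)$ of $G$ finalized by $F$ is context-free.
   Context: A context-free grammar $G=(V,T,P,S)$ has total alphabet $V$, terminal alphabet $T\subseteq V$, nonterminal alphabet $N=V-T$, finite rule set $P\subseteq N\times V^*$, start symbol $S\in N$; $\Rightarrow^*$ is its derivation relation and $\phi(G)=\{w\in V^*\mid S\Rightarrow^* w\}$ is its set of sentential forms. For $X\subseteq V$, $\pi_X$ denotes the homomorphism from $V^*$ to $X^*$ with $\pi_X(a)=a$ for $a\in X$ and $\pi_X(a)=\varepsilon$ for $a\in V-X$. For $W\subseteq V$ and $F\subseteq W^*$, set $\phi(G,F)=\{x\in\phi(G)\mid \pi_W(x)\in F\}$ and $L(G,F)=\{\pi_T(y)\mid y\in\phi(G,F),\ \pi_{N-W}(y)=\varepsilon\}$ (the language of $G$ finalized by $F$). *)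

theory Defs
  imports Main
begin

record 'a grammar =
  Vs :: "'a set"
  Ts :: "'a set"
  Ps :: "('a \<times> 'a list) set"
  St :: 'a

definition Ns :: "('a, 'b) grammar_scheme \<Rightarrow> 'a set" where
  "Ns G = Vs G - Ts G"

definition cfg :: "('a, 'b) grammar_scheme \<Rightarrow> bool" where
  "cfg G \<longleftrightarrow> finite (Vs G) \<and> Ts G \<subseteq> Vs G \<and> St G \<in> Ns G \<and> finite (Ps G)
     \<and> (\<forall>(A, \<alpha>) \<in> Ps G. A \<in> Ns G \<and> set \<alpha> \<subseteq> Vs G)"

definition step :: "('a, 'b) grammar_scheme \<Rightarrow> 'a list \<Rightarrow> 'a list \<Rightarrow> bool" where
  "step G u v \<longleftrightarrow> (\<exists>x A \<alpha> y. (A, \<alpha>) \<in> Ps G \<and> u = x @ [A] @ y \<and> v = x @ \<alpha> @ y)"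

definition derives :: "('a, 'b) grammar_scheme \<Rightarrow> 'a list \<Rightarrow> 'a list \<Rightarrow> bool" where
  "derives G = (step G)\<^sup>*\<^sup>*"

definition sentential :: "('a, 'b) grammar_scheme \<Rightarrow> 'a list set" where
  "sentential G = {w. derives G [St G] w}"

definition proj :: "'a set \<Rightarrow> 'a list \<Rightarrow> 'a list" where
  "proj X w = filter (\<lambda>a. a \<in> X) w"

definition lang :: "('a, 'b) grammar_scheme \<Rightarrow> 'a list set" where
  "lang G = {w. w \<in> lists (Ts G) \<and> derives G [St G] w}"

definition sentential_fin :: "('a, 'b) grammar_scheme \<Rightarrow> 'a set \<Rightarrow> 'a list set \<Rightarrow> 'a list set" where
  "sentential_fin G W F = {x \<in> sentential G. proj W x \<in> F}"

definition lang_fin :: "('a, 'b) grammar_scheme \<Rightarrow> 'a set \<Rightarrow> 'a list set \<Rightarrow> 'a list set" where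
  "lang_fin G W F = {proj (Ts G) y | y. y \<in> sentential_fin G W F \<and> proj (Ns G - W) y = []}"

text \<open>Context-free languages: generated by some context-free grammar; the grammar's
  symbols are of type 'a + nat, terminals of L embedded via Inl (fresh nonterminals
  are thus always available).\<close>
definition context_free :: "'a list set \<Rightarrow> bool" where
  "context_free L \<longleftrightarrow> (\<exists>G :: ('a + nat) grammar. cfg G \<and> lang G = map Inl ` L)"

datatype 'a rexp = Zero | One | Atom 'a | Plus "'a rexp" "'a rexp"
  | Times "'a rexp" "'a rexp" | Star "'a rexp"

definition conc :: "'a list set \<Rightarrow> 'a list set \<Rightarrow> 'a list set" where
  "conc A B = {u @ v | u v. u \<in> A \<and> v \<in> B}"

inductive_set star :: "'a list set \<Rightarrow> 'a list set" for A where
  star_Nil: "[] \<in> star A"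
| star_app: "u \<in> A \<Longrightarrow> v \<in> star A \<Longrightarrow> u @ v \<in> star A"

fun rlang :: "'a rexp \<Rightarrow> 'a list set" where
  "rlang Zero = {}"
| "rlang One = {[]}"
| "rlang (Atom a) = {[a]}"
| "rlang (Plus r s) = rlang r \<union> rlang s"
| "rlang (Times r s) = conc (rlang r) (rlang s)"
| "rlang (Star r) = star (rlang r)"

definition regular :: "'a list set \<Rightarrow> bool" where
  "regular L \<longleftrightarrow> (\<exists>r. rlang r = L)"

end

theory Submission
  imports Defs
begin

lemma derives_lists:
  assumes "cfg G" "derives G u v" "u \<in> lists (Vs G)"
  shows "v \<in> lists (Vs G)"
  using assms(2,3) unfolding derives_def
proof (induction rule: rtranclp_induct)
  case base thus ?case by simp
next
  case (step y z)
  then obtain x A \<alpha> w where r: "(A,\<alpha>) \<in> Ps G" "y = x@[A]@w" "z = x@\<alpha>@w"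
    by (auto simp: step_def)
  with assms(1) have "set \<alpha> \<subseteq> Vs G" unfolding cfg_def by auto
  with step r show ?case by auto
qed

lemma derives_ctx: "derives G u v \<Longrightarrow> derives G (x@u@y) (x@v@y)"
  unfolding derives_def
proof (induction rule: rtranclp_induct)
  case base thus ?case by simp
next
  case (step a b)
  from step.hyps(2) obtain x' A \<alpha> y' where "(A,\<alpha>) \<in> Ps G" "a = x'@[A]@y'" "b = x'@\<alpha>@y'"
    by (auto simp: step_def)
  hence "step G (x@a@y) (x@b@y)" unfolding step_def
    by (intro exI[of _ "x@x'"] exI[of _ A] exI[of _ \<alpha>] exI[of _ "y'@y"]) auto
  with step.IH show ?case by (rule rtranclp.rtrancl_into_rtrancl)
qed

lemma derives_append: "derives G u1 v1 \<Longrightarrow> derives G u2 v2 \<Longrightarrow> derives G (u1@u2) (v1@v2)"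
proof -
  assume a: "derives G u1 v1" "derives G u2 v2"
  have "derives G ([]@u1@u2) ([]@v1@u2)" by (rule derives_ctx[OF a(1)])
  moreover have "derives G (v1@u2@[]) (v1@v2@[])" by (rule derives_ctx[OF a(2)])
  ultimately show ?thesis unfolding derives_def by simp
qed

definition ren :: "('b \<Rightarrow> 'c) \<Rightarrow> 'b grammar \<Rightarrow> 'c grammar" where
  "ren f G = \<lparr>Vs = f ` Vs G, Ts = f ` Ts G, Ps = (\<lambda>(A,\<alpha>). (f A, map f \<alpha>)) ` Ps G, St = f (St G)\<rparr>"

lemma derives_unren:
  assumes cfg: "cfg G" and inj: "inj_on f (Vs G)"
    and d: "derives (ren f G) (map f u) w" and u: "u \<in> lists (Vs G)"
  shows "\<exists>v. w = map f v \<and> derives G u v"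
  using d unfolding derives_def
proof (induction rule: rtranclp_induct)
  case base thus ?case by auto
next
  case (step y z)
  from step.IH obtain v where v: "y = map f v" "(step G)\<^sup>*\<^sup>* u v" by blast
  have vV: "v \<in> lists (Vs G)" using derives_lists[OF cfg _ u] v(2) unfolding derives_def by blast
  from step.hyps(2) obtain x B \<beta> y' where r: "(B,\<beta>) \<in> Ps (ren f G)" "y = x@[B]@y'" "z = x@\<beta>@y'"
    by (auto simp: step_def)
  then obtain A \<alpha> where A: "(A,\<alpha>) \<in> Ps G" "B = f A" "\<beta> = map f \<alpha>" by (auto simp: ren_def)
  have AV: "A \<in> Vs G" using cfg A(1) unfolding cfg_def Ns_def by auto
  from v(1) r(2) A(2) have "map f v = x @ [f A] @ y'" by simp
  then obtain x0 A0 y0 where s: "v = x0@[A0]@y0" "map f x0 = x" "f A0 = f A" "map f y0 = y'"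
    by (auto simp: map_eq_append_conv)
  have "A0 \<in> Vs G" using vV s(1) by auto
  with AV s(3) inj have "A0 = A" by (auto dest: inj_onD)
  hence st: "step G v (x0@\<alpha>@y0)" using s(1) A(1) unfolding step_def by blast
  have "z = map f (x0@\<alpha>@y0)" using r(3) s A(3) by simp
  with rtranclp.rtrancl_into_rtrancl[OF v(2) st] show ?case by blast
qed

lemma step_ren: "step G u v \<Longrightarrow> step (ren f G) (map f u) (map f v)"
  unfolding step_def ren_def
  by (fastforce)

lemma derives_ren: "derives G u v \<Longrightarrow> derives (ren f G) (map f u) (map f v)"
  unfolding derives_def
proof (induction rule: rtranclp_induct)
  case base thus ?case by simp
next
  case (step y z) thus ?case using step_ren[of G y z f] by (meson rtranclp.rtrancl_into_rtrancl)
qed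

lemma cf_from:
  fixes G2 :: "('a + 'n) grammar"
  assumes cfg: "cfg G2" and TL: "Ts G2 \<subseteq> range Inl" and L: "lang G2 = map Inl ` L"
  shows "context_free L"
proof -
  have fV: "finite (Vs G2)" using cfg unfolding cfg_def by auto
  have "finite (Inr -` Vs G2)" using finite_vimageI[OF fV] inj_Inr by blast
  then obtain enc :: "'n \<Rightarrow> nat" and n where enc: "inj_on enc (Inr -` Vs G2)"
    using finite_imp_inj_to_nat_seg by blast
  define f :: "'a + 'n \<Rightarrow> 'a + nat" where "f = map_sum id enc"
  have inj: "inj_on f (Vs G2)"
  proof (rule inj_onI)
    fix x y assume xy: "x \<in> Vs G2" "y \<in> Vs G2" "f x = f y"
    show "x = y"
    proof (cases x; cases y)
      fix a b assume "x = Inr a" "y = Inr b"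
      with xy enc show ?thesis by (auto simp: f_def dest: inj_onD)
    qed (use xy in \<open>auto simp: f_def\<close>)
  qed
  have fInl: "f (Inl a) = Inl a" for a by (simp add: f_def)
  have TV: "Ts G2 \<subseteq> Vs G2" using cfg unfolding cfg_def by auto
  have cfg': "cfg (ren f G2)"
  proof -
    have "St G2 \<in> Vs G2" "St G2 \<notin> Ts G2" using cfg unfolding cfg_def Ns_def by auto
    hence S: "f (St G2) \<in> f ` Vs G2 - f ` Ts G2" using inj TV by (auto simp: inj_on_image_mem_iff)
    have R: "f A \<in> f ` Vs G2 - f ` Ts G2 \<and> set (map f \<alpha>) \<subseteq> f ` Vs G2" if "(A,\<alpha>) \<in> Ps G2" for A \<alpha>
    proof -
      have "A \<in> Vs G2" "A \<notin> Ts G2" "set \<alpha> \<subseteq> Vs G2" using cfg that unfolding cfg_def Ns_def by auto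
      thus ?thesis using inj TV by (auto simp: inj_on_image_mem_iff)
    qed
    show ?thesis using cfg S R TV unfolding cfg_def ren_def Ns_def by (auto; blast)
  qed
  have SV: "[St G2] \<in> lists (Vs G2)" using cfg unfolding cfg_def Ns_def by auto
  have "lang (ren f G2) = map Inl ` L"
  proof
    show "lang (ren f G2) \<subseteq> map Inl ` L"
    proof
      fix w assume "w \<in> lang (ren f G2)"
      hence w: "w \<in> lists (f ` Ts G2)" "derives (ren f G2) (map f [St G2]) w"
        by (auto simp: lang_def ren_def)
      obtain v where v: "w = map f v" "derives G2 [St G2] v"
        using derives_unren[OF cfg inj w(2) SV] by blast
      have vV: "v \<in> lists (Vs G2)" using derives_lists[OF cfg v(2) SV] .
      have vT: "v \<in> lists (Ts G2)"
        unfolding in_lists_conv_set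
      proof (intro ballI)
        fix x assume "x \<in> set v"
        hence "f x \<in> f ` Ts G2" "x \<in> Vs G2" using w(1) v(1) vV by auto
        thus "x \<in> Ts G2" using inj TV by (auto simp: inj_on_image_mem_iff)
      qed
      hence "v \<in> lang G2" using v by (auto simp: lang_def)
      with L obtain l where l: "l \<in> L" "v = map Inl l" by auto
      have "w = map Inl l" using v(1) l(2) fInl by simp
      thus "w \<in> map Inl ` L" using l by auto
    qed
  next
    show "map Inl ` L \<subseteq> lang (ren f G2)"
    proof
      fix w :: "('a + nat) list" assume "w \<in> map Inl ` L"
      then obtain l where l: "l \<in> L" "w = map Inl l" by auto
      have "(map Inl l :: ('a + 'n) list) \<in> lang G2" using L l by auto
      hence v: "(map Inl l :: ('a + 'n) list) \<in> lists (Ts G2)" "derives G2 [St G2] (map Inl l)" by (auto simp: lang_def)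
      have "map f (map Inl l :: ('a + 'n) list) = w" using l fInl by simp
      moreover have "derives (ren f G2) (map f [St G2]) (map f (map Inl l :: ('a + 'n) list))" by (rule derives_ren[OF v(2)])
      moreover have "map f (map Inl l :: ('a + 'n) list) \<in> lists (f ` Ts G2)" using v(1) by auto
      ultimately show "w \<in> lang (ren f G2)" by (auto simp: lang_def ren_def)
    qed
  qed
  with cfg' show ?thesis unfolding context_free_def by blast
qed



definition quot :: "'a list \<Rightarrow> 'a list set \<Rightarrow> 'a list set" where
  "quot u L = {v. u @ v \<in> L}"

lemma star_append: "u \<in> star A \<Longrightarrow> v \<in> star A \<Longrightarrow> u @ v \<in> star A"
  apply (induction rule: star.induct)
   apply simp
  by (metis append.assoc star.star_app)

lemma quot_conc: "quot u (conc A B) = conc (quot u A) B \<union> \<Union> {quot w B | v w. u = v@w \<and> v \<in> A}"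
proof (rule set_eqI)
  fix x
  show "x \<in> quot u (conc A B) \<longleftrightarrow> x \<in> conc (quot u A) B \<union> \<Union> {quot w B | v w. u = v@w \<and> v \<in> A}"
  proof
    assume "x \<in> quot u (conc A B)"
    then obtain a b where ab: "u @ x = a @ b" "a \<in> A" "b \<in> B" by (auto simp: quot_def conc_def)
    then obtain us where "(u = a@us \<and> us@x = b) \<or> (u@us = a \<and> x = us@b)"
      by (auto simp: append_eq_append_conv2)
    thus "x \<in> conc (quot u A) B \<union> \<Union> {quot w B | v w. u = v@w \<and> v \<in> A}"
    proof
      assume h: "u = a@us \<and> us@x = b"
      hence "x \<in> quot us B" using ab by (simp add: quot_def)
      thus ?thesis using h ab by blast
    next
      assume h: "u@us = a \<and> x = us@b"
      hence "us \<in> quot u A" using ab by (simp add: quot_def)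
      thus ?thesis using h ab by (auto simp: conc_def)
    qed
  next
    assume "x \<in> conc (quot u A) B \<union> \<Union> {quot w B | v w. u = v@w \<and> v \<in> A}"
    thus "x \<in> quot u (conc A B)"
    proof
      assume "x \<in> conc (quot u A) B"
      then obtain a b where "u@a \<in> A" "b \<in> B" "x = a@b" by (auto simp: quot_def conc_def)
      thus ?thesis unfolding quot_def conc_def by (metis (mono_tags, lifting) append.assoc mem_Collect_eq)
    next
      assume "x \<in> \<Union> {quot w B | v w. u = v@w \<and> v \<in> A}"
      then obtain v w where "u = v@w" "v \<in> A" "w@x \<in> B" by (auto simp: quot_def)
      thus ?thesis unfolding quot_def conc_def by (metis (mono_tags, lifting) append.assoc mem_Collect_eq)
    qed
  qed
qed

lemma quot_star_aux: "s \<in> star A \<Longrightarrow> s = u @ x \<Longrightarrow>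
   (x = [] \<and> u \<in> star A) \<or> (\<exists>v w. u = v@w \<and> v \<in> star A \<and> x \<in> conc (quot w A) (star A))"
proof (induction arbitrary: u rule: star.induct)
  case star_Nil thus ?case by (auto intro: star.intros)
next
  case (star_app a s)
  from star_app.prems obtain us where "(a = u@us \<and> us@s = x) \<or> (a@us = u \<and> s = us@x)"
    by (auto simp: append_eq_append_conv2)
  thus ?case
  proof
    assume h: "a = u@us \<and> us@s = x"
    hence "x \<in> conc (quot u A) (star A)" using star_app by (auto simp: conc_def quot_def)
    thus ?case by (intro disjI2 exI[of _ "[]"] exI[of _ u]) (auto intro: star.intros)
  next
    assume h: "a@us = u \<and> s = us@x"
    from star_app.IH[OF conjunct2[OF h]] show ?case
    proof
      assume "x = [] \<and> us \<in> star A" thus ?case using h star_app by (auto intro: star.intros)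
    next
      assume "\<exists>v w. us = v@w \<and> v \<in> star A \<and> x \<in> conc (quot w A) (star A)"
      then obtain v w where "us = v@w" "v \<in> star A" "x \<in> conc (quot w A) (star A)" by blast
      thus ?case using h star_app
        by (intro disjI2 exI[of _ "a@v"] exI[of _ w]) (auto intro: star.intros)
    qed
  qed
qed

lemma quot_star: "quot u (star A) = (if u \<in> star A then {[]} else {}) \<union>
   \<Union> ((\<lambda>X. conc X (star A)) ` {quot w A | v w. u = v@w \<and> v \<in> star A})"
proof (rule set_eqI)
  fix x
  show "x \<in> quot u (star A) \<longleftrightarrow> x \<in> (if u \<in> star A then {[]} else {}) \<union>
     \<Union> ((\<lambda>X. conc X (star A)) ` {quot w A | v w. u = v@w \<and> v \<in> star A})"
  proof
    assume "x \<in> quot u (star A)"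
    hence "u @ x \<in> star A" by (simp add: quot_def)
    from quot_star_aux[OF this refl] show "x \<in> (if u \<in> star A then {[]} else {}) \<union>
     \<Union> ((\<lambda>X. conc X (star A)) ` {quot w A | v w. u = v@w \<and> v \<in> star A})" by auto
  next
    assume "x \<in> (if u \<in> star A then {[]} else {}) \<union>
     \<Union> ((\<lambda>X. conc X (star A)) ` {quot w A | v w. u = v@w \<and> v \<in> star A})"
    thus "x \<in> quot u (star A)"
    proof (cases "u \<in> star A \<and> x = []")
      case False
      with \<open>x \<in> _\<close> obtain v w a s where "u = v@w" "v \<in> star A" "w@a \<in> A" "s \<in> star A" "x = a@s"
        by (auto simp: conc_def quot_def split: if_splits)
      hence "v @ ((w@a) @ s) \<in> star A" by (meson star.star_app star_append)
      thus ?thesis using \<open>u = v@w\<close> \<open>x = a@s\<close> by (simp add: quot_def)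
    qed (auto simp: quot_def)
  qed
qed

lemma finite_quot: "finite (range (\<lambda>u. quot u (rlang r)))"
proof (induction r)
  case Zero
  have "range (\<lambda>u. quot u (rlang Zero)) \<subseteq> {{}}" by (auto simp: quot_def)
  thus ?case by (rule finite_subset) simp
next
  case One
  have "quot u {[]} \<in> {{},{[]}}" for u by (cases u) (auto simp: quot_def)
  hence "range (\<lambda>u. quot u (rlang One)) \<subseteq> {{},{[]}}" by auto
  thus ?case by (rule finite_subset) simp
next
  case (Atom a)
  have "quot u {[a]} \<in> {{},{[]},{[a]}}" for u
    by (cases u) (auto simp: quot_def Cons_eq_append_conv)
  hence "range (\<lambda>u. quot u (rlang (Atom a))) \<subseteq> {{},{[]},{[a]}}" by auto
  thus ?case by (rule finite_subset) simp
next
  case (Plus r s)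
  have "range (\<lambda>u. quot u (rlang (Plus r s))) \<subseteq> (\<lambda>(X,Y). X \<union> Y) ` (range (\<lambda>u. quot u (rlang r)) \<times> range (\<lambda>u. quot u (rlang s)))"
  proof
    fix Y assume "Y \<in> range (\<lambda>u. quot u (rlang (Plus r s)))"
    then obtain u where "Y = quot u (rlang (Plus r s))" by auto
    hence "Y = (\<lambda>(X,Y). X \<union> Y) (quot u (rlang r), quot u (rlang s))" by (auto simp: quot_def)
    thus "Y \<in> (\<lambda>(X,Y). X \<union> Y) ` (range (\<lambda>u. quot u (rlang r)) \<times> range (\<lambda>u. quot u (rlang s)))"
      by blast
  qed
  thus ?case by (rule finite_subset) (intro finite_imageI finite_cartesian_product Plus.IH)
next
  case (Times r s)
  have "range (\<lambda>u. quot u (rlang (Times r s))) \<subseteq> (\<lambda>(X,S). conc X (rlang s) \<union> \<Union>S) ` (range (\<lambda>u. quot u (rlang r)) \<times> Pow (range (\<lambda>u. quot u (rlang s))))"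
  proof
    fix Y assume "Y \<in> range (\<lambda>u. quot u (rlang (Times r s)))"
    then obtain u where "Y = quot u (rlang (Times r s))" by auto
    hence "Y = (\<lambda>(X,S). conc X (rlang s) \<union> \<Union>S) (quot u (rlang r), {quot w (rlang s) | v w. u = v@w \<and> v \<in> rlang r})"
      by (simp add: quot_conc)
    moreover have "(quot u (rlang r), {quot w (rlang s) | v w. u = v@w \<and> v \<in> rlang r}) \<in> range (\<lambda>u. quot u (rlang r)) \<times> Pow (range (\<lambda>u. quot u (rlang s)))"
      by blast
    ultimately show "Y \<in> (\<lambda>(X,S). conc X (rlang s) \<union> \<Union>S) ` (range (\<lambda>u. quot u (rlang r)) \<times> Pow (range (\<lambda>u. quot u (rlang s))))"
      by blast
  qed
  thus ?case by (rule finite_subset) (intro finite_imageI finite_cartesian_product Times.IH finite_Pow_iff[THEN iffD2])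
next
  case (Star r)
  let ?g = "\<lambda>(b::bool, S). (if b then {[]} else {}) \<union> \<Union> ((\<lambda>X. conc X (star (rlang r))) ` S)"
  have "range (\<lambda>u. quot u (rlang (Star r))) \<subseteq> ?g ` (UNIV \<times> Pow (range (\<lambda>u. quot u (rlang r))))"
  proof
    fix Y assume "Y \<in> range (\<lambda>u. quot u (rlang (Star r)))"
    then obtain u where "Y = quot u (rlang (Star r))" by auto
    hence "Y = ?g (u \<in> star (rlang r), {quot w (rlang r) | v w. u = v@w \<and> v \<in> star (rlang r)})"
      by (simp add: quot_star)
    moreover have "(u \<in> star (rlang r), {quot w (rlang r) | v w. u = v@w \<and> v \<in> star (rlang r)}) \<in> UNIV \<times> Pow (range (\<lambda>u. quot u (rlang r)))"
      by blast
    ultimately show "Y \<in> ?g ` (UNIV \<times> Pow (range (\<lambda>u. quot u (rlang r))))" by blast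
  qed
  thus ?case by (rule finite_subset) (intro finite_imageI finite_cartesian_product Star.IH finite_Pow_iff[THEN iffD2] finite_UNIV)
qed



lemma quot_Nil[simp]: "quot [] L = L" by (simp add: quot_def)
lemma quot_append: "quot (u@v) L = quot v (quot u L)" by (simp add: quot_def)
lemma quot_Cons: "quot (a#v) L = quot v (quot [a] L)" by (simp add: quot_def)
lemma Nil_in_quot: "[] \<in> quot u L \<longleftrightarrow> u \<in> L" by (simp add: quot_def)

type_synonym 'a trip = "('a list set \<times> 'a \<times> 'a list set) option"

locale fin_ctx =
  fixes G :: "'a grammar" and W :: "'a set" and F :: "'a list set"
  assumes cfgG: "cfg G" and finQ: "finite (range (\<lambda>u. quot u F))"
begin

definition Q where "Q = range (\<lambda>u. quot u F)"

definition dl :: "'a list set \<Rightarrow> 'a \<Rightarrow> 'a list set" where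
  "dl p X = (if X \<in> W then quot [X] p else p)"

definition outp :: "'a \<Rightarrow> ('a + 'a trip) list" where
  "outp X = (if X \<in> Ts G then [Inl X] else [])"

fun rep :: "'a list set \<Rightarrow> 'a list \<Rightarrow> 'a list set \<Rightarrow> ('a + 'a trip) list \<Rightarrow> bool" where
  "rep p [] q t \<longleftrightarrow> p = q \<and> t = []"
| "rep p (X#xs) q t \<longleftrightarrow> (\<exists>r t2. r \<in> Q \<and> rep r xs q t2 \<and>
     (t = Inr (Some (p,X,r)) # t2 \<or> (X \<in> Ts G \<union> W \<and> r = dl p X \<and> t = outp X @ t2)))"

definition G2 :: "('a + 'a trip) grammar" where
  "G2 = \<lparr>Vs = Inl ` Ts G \<union> Inr ` ({None} \<union> Some ` (Q \<times> Vs G \<times> Q)), Ts = Inl ` Ts G,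
    Ps = {(Inr None, t) | t q. q \<in> Q \<and> [] \<in> q \<and> rep F [St G] q t}
       \<union> {(Inr (Some (p,A,q)), t) | p A \<alpha> q t. (A,\<alpha>) \<in> Ps G \<and> p \<in> Q \<and> q \<in> Q \<and> rep p \<alpha> q t},
    St = Inr None\<rparr>"

lemma F_Q: "F \<in> Q" unfolding Q_def by (metis quot_Nil rangeI)

lemma quot_Q: "p \<in> Q \<Longrightarrow> quot u p \<in> Q"
  unfolding Q_def by (auto simp: quot_append[symmetric])

lemma dl_Q: "p \<in> Q \<Longrightarrow> dl p X \<in> Q"
  unfolding dl_def using quot_Q by auto

lemma rep_append:
  "rep p (u@v) q t \<longleftrightarrow> (\<exists>r t1 t2. t = t1@t2 \<and> rep p u r t1 \<and> rep r v q t2)"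
proof (induction u arbitrary: p t)
  case Nil thus ?case by auto
next
  case (Cons X xs)
  show ?case
  proof
    assume "rep p ((X#xs)@v) q t"
    then obtain r t2 where h: "r \<in> Q" "rep r (xs@v) q t2"
      "t = Inr (Some (p,X,r)) # t2 \<or> (X \<in> Ts G \<union> W \<and> r = dl p X \<and> t = outp X @ t2)" by auto
    from h(2) Cons.IH obtain r' t1 t3 where h1: "t2 = t1@t3" "rep r xs r' t1" "rep r' v q t3" by blast
    from h(3) show "\<exists>r t1 t2. t = t1@t2 \<and> rep p (X#xs) r t1 \<and> rep r v q t2"
    proof
      assume e: "t = Inr (Some (p,X,r)) # t2"
      have "rep p (X#xs) r' (Inr (Some (p,X,r)) # t1)" using h(1) h1(2) by auto
      thus ?thesis using e h1 by (intro exI[of _ r'] exI[of _ "Inr (Some (p,X,r)) # t1"] exI[of _ t3]) auto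
    next
      assume e: "X \<in> Ts G \<union> W \<and> r = dl p X \<and> t = outp X @ t2"
      have "rep p (X#xs) r' (outp X @ t1)" using h(1) h1(2) e by auto
      thus ?thesis using e h1 by (intro exI[of _ r'] exI[of _ "outp X @ t1"] exI[of _ t3]) auto
    qed
  next
    assume "\<exists>r t1 t2. t = t1@t2 \<and> rep p (X#xs) r t1 \<and> rep r v q t2"
    then obtain r' t1 t3 where h: "t = t1@t3" "rep p (X#xs) r' t1" "rep r' v q t3" by blast
    from h(2) obtain r t2 where h2: "r \<in> Q" "rep r xs r' t2"
      "t1 = Inr (Some (p,X,r)) # t2 \<or> (X \<in> Ts G \<union> W \<and> r = dl p X \<and> t1 = outp X @ t2)" by auto
    have R: "rep r (xs@v) q (t2@t3)" using Cons.IH h h2 by blast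
    from h2(3) show "rep p ((X#xs)@v) q t"
    proof
      assume "t1 = Inr (Some (p,X,r)) # t2"
      thus ?thesis using R h h2(1) by auto
    next
      assume e: "X \<in> Ts G \<union> W \<and> r = dl p X \<and> t1 = outp X @ t2"
      hence "t = outp X @ (t2 @ t3)" using h by simp
      thus ?thesis using R e h2(1) by (simp only: append_Cons rep.simps) blast
    qed
  qed
qed

lemma rep_Q: "rep p u q t \<Longrightarrow> p \<in> Q \<Longrightarrow> q \<in> Q"
  by (induction u arbitrary: p t) auto

lemma rep_noS: "rep p u q t \<Longrightarrow> Inr None \<notin> set t"
  by (induction u arbitrary: p t) (auto simp: outp_def)

lemma rep_sets: "rep p u q t \<Longrightarrow> p \<in> Q \<Longrightarrow> u \<in> lists (Vs G) \<Longrightarrow>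
   set t \<subseteq> Vs G2 \<and> length t \<le> length u"
proof (induction u arbitrary: p t)
  case Nil thus ?case by simp
next
  case (Cons X xs)
  from Cons.prems(1) obtain r t2 where h: "r \<in> Q" "rep r xs q t2"
      "t = Inr (Some (p,X,r)) # t2 \<or> (X \<in> Ts G \<union> W \<and> r = dl p X \<and> t = outp X @ t2)" by auto
  have X: "X \<in> Vs G" "xs \<in> lists (Vs G)" using Cons.prems(3) by auto
  from Cons.IH[OF h(2) h(1) X(2)] have I: "set t2 \<subseteq> Vs G2 \<and> length t2 \<le> length xs" .
  from h(3) show ?case
  proof
    assume "t = Inr (Some (p,X,r)) # t2" thus ?case using I X h(1) Cons.prems(2) by (auto simp: G2_def)
  next
    assume "X \<in> Ts G \<union> W \<and> r = dl p X \<and> t = outp X @ t2"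
    thus ?case using I by (auto simp: G2_def outp_def)
  qed
qed

lemma rep_split:
  "rep p v q (x @ [Inr (Some (p',A,r'))] @ z) \<Longrightarrow>
   \<exists>v1 v2. v = v1@[A]@v2 \<and> rep p v1 p' x \<and> r' \<in> Q \<and> rep r' v2 q z"
proof (induction v arbitrary: p x)
  case Nil thus ?case by simp
next
  case (Cons X xs)
  then obtain r t2 where h: "r \<in> Q" "rep r xs q t2"
      "x @ [Inr (Some (p',A,r'))] @ z = Inr (Some (p,X,r)) # t2 \<or>
       (X \<in> Ts G \<union> W \<and> r = dl p X \<and> x @ [Inr (Some (p',A,r'))] @ z = outp X @ t2)" by auto
  from h(3) show ?case
  proof
    assume e: "x @ [Inr (Some (p',A,r'))] @ z = Inr (Some (p,X,r)) # t2"
    show ?case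
    proof (cases x)
      case Nil
      with e h show ?thesis by (intro exI[of _ "[]"] exI[of _ xs]) auto
    next
      case (Cons n x')
      with e have "n = Inr (Some (p,X,r))" "t2 = x' @ [Inr (Some (p',A,r'))] @ z" by auto
      with Cons.IH h(2) obtain v1 v2 where "xs = v1@[A]@v2" "rep r v1 p' x'" "r' \<in> Q" "rep r' v2 q z"
        by blast
      thus ?thesis using h(1) \<open>x = n#x'\<close> \<open>n = _\<close>
        by (intro exI[of _ "X#v1"] exI[of _ v2]) auto
    qed
  next
    assume e: "X \<in> Ts G \<union> W \<and> r = dl p X \<and> x @ [Inr (Some (p',A,r'))] @ z = outp X @ t2"
    show ?case
    proof (cases "X \<in> Ts G")
      case False
      hence "t2 = x @ [Inr (Some (p',A,r'))] @ z" using e by (simp add: outp_def)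
      with Cons.IH h(2) obtain v1 v2 where "xs = v1@[A]@v2" "rep r v1 p' x" "r' \<in> Q" "rep r' v2 q z"
        by blast
      thus ?thesis using h(1) e False
        by (intro exI[of _ "X#v1"] exI[of _ v2]) (auto simp: outp_def)
    next
      case True
      hence e2: "x @ [Inr (Some (p',A,r'))] @ z = Inl X # t2" using e by (simp add: outp_def)
      then obtain x' where x': "x = Inl X # x'" "t2 = x' @ [Inr (Some (p',A,r'))] @ z"
        by (cases x) auto
      with Cons.IH h(2) obtain v1 v2 where "xs = v1@[A]@v2" "rep r v1 p' x'" "r' \<in> Q" "rep r' v2 q z"
        by blast
      thus ?thesis using h(1) e True x'
        by (intro exI[of _ "X#v1"] exI[of _ v2]) (auto simp: outp_def)
    qed
  qed
qed

lemma outp_proj: "outp X @ map Inl (proj (Ts G) xs) = map Inl (proj (Ts G) (X#xs))"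
  by (simp add: outp_def proj_def)

lemma quot_dl: "quot (proj W xs) (dl p X) = quot (proj W (X#xs)) p"
  by (simp add: proj_def dl_def quot_def)

lemma rep_terminal: "rep p v q t \<Longrightarrow> t \<in> lists (range Inl) \<Longrightarrow>
   v \<in> lists (Ts G \<union> W) \<and> t = map Inl (proj (Ts G) v) \<and> q = quot (proj W v) p"
proof (induction v arbitrary: p t)
  case Nil thus ?case by (simp add: proj_def)
next
  case (Cons X xs)
  from Cons.prems(1) obtain r t2 where h: "r \<in> Q" "rep r xs q t2"
      "t = Inr (Some (p,X,r)) # t2 \<or> (X \<in> Ts G \<union> W \<and> r = dl p X \<and> t = outp X @ t2)" by auto
  have h3: "X \<in> Ts G \<union> W \<and> r = dl p X \<and> t = outp X @ t2"
    using h(3) Cons.prems(2) by auto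
  hence t2L: "t2 \<in> lists (range Inl)" using Cons.prems(2) by simp
  from Cons.IH[OF h(2) t2L] have I: "xs \<in> lists (Ts G \<union> W) \<and> t2 = map Inl (proj (Ts G) xs) \<and> q = quot (proj W xs) r" .
  thus ?case using h3 outp_proj[of X xs] quot_dl[of xs p X] by simp
qed

lemma rep_final: "v \<in> lists (Ts G \<union> W) \<Longrightarrow> p \<in> Q \<Longrightarrow>
   rep p v (quot (proj W v) p) (map Inl (proj (Ts G) v))"
proof (induction v arbitrary: p)
  case Nil thus ?case by (simp add: proj_def)
next
  case (Cons X xs)
  have r: "dl p X \<in> Q" using dl_Q Cons.prems by auto
  have xs: "xs \<in> lists (Ts G \<union> W)" and X: "X \<in> Ts G \<union> W" using Cons.prems(1) by auto
  have IH: "rep (dl p X) xs (quot (proj W xs) (dl p X)) (map Inl (proj (Ts G) xs))"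
    using Cons.IH[OF xs r] .
  show ?case unfolding quot_dl[symmetric] outp_proj[symmetric] rep.simps(2) using IH r X by blast
qed

lemma SV: "St G \<in> Vs G" "St G \<notin> Ts G" using cfgG unfolding cfg_def Ns_def by auto

lemma rule_V: "(A,\<alpha>) \<in> Ps G \<Longrightarrow> A \<in> Vs G \<and> A \<notin> Ts G \<and> \<alpha> \<in> lists (Vs G)"
  using cfgG unfolding cfg_def Ns_def by auto

lemma finQ': "finite Q" using finQ unfolding Q_def .

lemma cfg_G2: "cfg G2"
proof -
  have fV: "finite (Vs G)" "Ts G \<subseteq> Vs G" "finite (Ps G)" using cfgG unfolding cfg_def by auto
  have fV2: "finite (Vs G2)" unfolding G2_def using fV finQ'
    by (auto intro!: finite_imageI finite_cartesian_product dest: finite_subset)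
  define M where "M = Max (insert 1 (length ` snd ` Ps G))"
  have M: "length \<alpha> \<le> M" if "(A,\<alpha>) \<in> Ps G" for A \<alpha>
    unfolding M_def using fV(3) that by (intro Max_ge) force+
  have M1: "1 \<le> M" unfolding M_def using fV(3) by (intro Max_ge) auto
  have NS: "Inr None \<in> Vs G2 - Ts G2" by (auto simp: G2_def)
  have PS: "Ps G2 \<subseteq> (Vs G2 - Ts G2) \<times> {t. set t \<subseteq> Vs G2 \<and> length t \<le> M}"
  proof
    fix x assume "x \<in> Ps G2"
    then consider (a) t q where "x = (Inr None, t)" "q \<in> Q" "[] \<in> q" "rep F [St G] q t"
      | (b) p A \<alpha> q t where "x = (Inr (Some (p,A,q)), t)" "(A,\<alpha>) \<in> Ps G" "p \<in> Q" "q \<in> Q" "rep p \<alpha> q t"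
      unfolding G2_def by auto
    thus "x \<in> (Vs G2 - Ts G2) \<times> {t. set t \<subseteq> Vs G2 \<and> length t \<le> M}"
    proof cases
      case a
      have "set t \<subseteq> Vs G2 \<and> length t \<le> length [St G]" using rep_sets[OF a(4) F_Q] SV by auto
      thus ?thesis using a NS M1 by auto
    next
      case b
      have "set t \<subseteq> Vs G2 \<and> length t \<le> length \<alpha>" using rep_sets[OF b(5) b(3)] rule_V[OF b(2)] by auto
      moreover have "Inr (Some (p,A,q)) \<in> Vs G2 - Ts G2" using b rule_V[OF b(2)] by (auto simp: G2_def)
      ultimately show ?thesis using b M[OF b(2)] by auto
    qed
  qed
  have "finite {t. set t \<subseteq> Vs G2 \<and> length t \<le> M}" using finite_lists_length_le[OF fV2] .
  hence fP: "finite (Ps G2)" using PS fV2 by (meson finite_Diff finite_SigmaI finite_subset)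
  have TsV: "Ts G2 \<subseteq> Vs G2" by (auto simp: G2_def)
  have St: "St G2 = Inr None" by (simp add: G2_def)
  have R: "\<forall>(A, \<alpha>) \<in> Ps G2. A \<in> Vs G2 - Ts G2 \<and> set \<alpha> \<subseteq> Vs G2" using PS by blast
  show ?thesis unfolding cfg_def Ns_def using fV2 NS fP TsV St R by simp
qed

lemma sound: "derives G2 [Inr None] t \<Longrightarrow>
   t = [Inr None] \<or> (\<exists>v q. derives G [St G] v \<and> [] \<in> q \<and> rep F v q t)"
  unfolding derives_def
proof (induction rule: rtranclp_induct)
  case base thus ?case by simp
next
  case (step y z)
  from step.hyps(2) obtain x B \<beta> w where r: "(B,\<beta>) \<in> Ps G2" "y = x@[B]@w" "z = x@\<beta>@w"
    by (auto simp: step_def)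
  from step.IH show ?case
  proof
    assume "y = [Inr None]"
    with r(2) have e: "x = []" "B = Inr None" "w = []" by (auto simp: Cons_eq_append_conv append_eq_Cons_conv)
    with r(1) obtain q where q: "q \<in> Q" "[] \<in> q" "rep F [St G] q \<beta>" unfolding G2_def by auto
    have "z = \<beta>" using e r(3) by simp
    hence "(step G)\<^sup>*\<^sup>* [St G] [St G] \<and> [] \<in> q \<and> rep F [St G] q z" using q by simp
    thus ?case by blast
  next
    assume "\<exists>v q. (step G)\<^sup>*\<^sup>* [St G] v \<and> [] \<in> q \<and> rep F v q y"
    then obtain v q where v: "(step G)\<^sup>*\<^sup>* [St G] v" "[] \<in> q" "rep F v q y" by blast
    have "B \<noteq> Inr None" using rep_noS[OF v(3)] r(2) by auto
    with r(1) obtain p A \<alpha> r' where B: "B = Inr (Some (p,A,r'))" "(A,\<alpha>) \<in> Ps G" "p \<in> Q" "r' \<in> Q" "rep p \<alpha> r' \<beta>"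
      by (auto simp: G2_def)
    from rep_split[of F v q x p A r' w] v(3) r(2) B(1) obtain v1 v2 where
      sp: "v = v1@[A]@v2" "rep F v1 p x" "rep r' v2 q w" by auto
    have st: "step G v (v1@\<alpha>@v2)" using sp(1) B(2) unfolding step_def by blast
    have "rep p (\<alpha>@v2) q (\<beta>@w)" using sp B(5) by (intro rep_append[THEN iffD2]) blast
    hence "rep F (v1@(\<alpha>@v2)) q (x@(\<beta>@w))" using sp by (intro rep_append[THEN iffD2]) blast
    hence "rep F (v1@\<alpha>@v2) q (x@\<beta>@w)" by simp
    thus ?case using rtranclp.rtrancl_into_rtrancl[OF v(1) st] v(2) r(3) by blast
  qed
qed

lemma complete: "derives G [St G] v \<Longrightarrow> \<forall>q t. rep F v q t \<and> [] \<in> q \<longrightarrow> derives G2 [Inr None] t"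
  unfolding derives_def
proof (induction rule: rtranclp_induct)
  case base
  show ?case
  proof (intro allI impI)
    fix q t assume a: "rep F [St G] q t \<and> [] \<in> q"
    hence "q \<in> Q" using rep_Q F_Q by blast
    hence "(Inr None, t) \<in> Ps G2" using a unfolding G2_def by (simp only: grammar.simps) (rule UnI1, blast)
    hence "step G2 [Inr None] t" unfolding step_def
      by (rule_tac exI[of _ "[]"], rule_tac exI[of _ "Inr None"], rule_tac exI[of _ t], rule_tac exI[of _ "[]"]) simp
    thus "(step G2)\<^sup>*\<^sup>* [Inr None] t" by blast
  qed
next
  case (step y z)
  from step.hyps(2) obtain x A \<alpha> w where r: "(A,\<alpha>) \<in> Ps G" "y = x@[A]@w" "z = x@\<alpha>@w"
    by (auto simp: step_def)
  show ?case
  proof (intro allI impI)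
    fix q t assume a: "rep F z q t \<and> [] \<in> q"
    have "rep F z q t" using a by blast
    hence "rep F (x@(\<alpha>@w)) q t" using r(3) by (metis append_assoc)
    from rep_append[THEN iffD1, OF this] obtain p t1 t23 where s1: "t = t1@t23" "rep F x p t1" "rep p (\<alpha>@w) q t23"
      by blast
    from rep_append[THEN iffD1, OF s1(3)] obtain r' t2 t3 where s2: "t23 = t2@t3" "rep p \<alpha> r' t2" "rep r' w q t3"
      by blast
    have pQ: "p \<in> Q" using rep_Q[OF s1(2) F_Q] .
    have rQ: "r' \<in> Q" using rep_Q[OF s2(2) pQ] .
    have "rep p [A] r' [Inr (Some (p,A,r'))]" using rQ by simp
    hence "rep p ([A]@w) q ([Inr (Some (p,A,r'))] @ t3)"
      using s2(3) by (intro rep_append[THEN iffD2]) blast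
    hence "rep F (x@([A]@w)) q (t1 @ ([Inr (Some (p,A,r'))] @ t3))"
      using s1(2) by (intro rep_append[THEN iffD2]) blast
    hence "rep F y q (t1 @ [Inr (Some (p,A,r'))] @ t3)" using r(2) by simp
    hence d: "(step G2)\<^sup>*\<^sup>* [Inr None] (t1 @ [Inr (Some (p,A,r'))] @ t3)" using step.IH a by blast
    have "(Inr (Some (p,A,r')), t2) \<in> Ps G2" using r(1) pQ rQ s2(2) unfolding G2_def
      by (simp only: grammar.simps) (rule UnI2, blast)
    hence "step G2 (t1 @ [Inr (Some (p,A,r'))] @ t3) t" unfolding step_def using s1(1) s2(1)
      by (rule_tac exI[of _ t1], rule_tac exI[of _ "Inr (Some (p,A,r'))"], rule_tac exI[of _ t2], rule_tac exI[of _ t3]) simp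
    thus "(step G2)\<^sup>*\<^sup>* [Inr None] t" using d by (rule rtranclp.rtrancl_into_rtrancl[rotated])
  qed
qed

lemma Ts_G2: "Ts G2 = Inl ` Ts G" by (simp add: G2_def)
lemma St_G2: "St G2 = Inr None" by (simp add: G2_def)

lemma lang_G2: "lang G2 = map Inl ` lang_fin G W F"
proof
  show "lang G2 \<subseteq> map Inl ` lang_fin G W F"
  proof
    fix w assume "w \<in> lang G2"
    hence w: "w \<in> lists (Inl ` Ts G)" "derives G2 [Inr None] w" unfolding lang_def Ts_G2 St_G2 by blast+
    have "w \<noteq> [Inr None]" using w(1) by auto
    with sound[OF w(2)] obtain v q where v: "derives G [St G] v" "[] \<in> q" "rep F v q w" by blast
    have "w \<in> lists (range Inl)" using w(1) by auto
    from rep_terminal[OF v(3) this] have t: "v \<in> lists (Ts G \<union> W)" "w = map Inl (proj (Ts G) v)"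
      "q = quot (proj W v) F" by auto
    have "proj W v \<in> F" using v(2) t(3) Nil_in_quot by auto
    moreover have "proj (Ns G - W) v = []" using t(1) unfolding proj_def Ns_def
      by (auto simp: filter_empty_conv)
    ultimately have "proj (Ts G) v \<in> lang_fin G W F" using v(1)
      unfolding lang_fin_def sentential_fin_def sentential_def by blast
    thus "w \<in> map Inl ` lang_fin G W F" using t(2) by blast
  qed
next
  show "map Inl ` lang_fin G W F \<subseteq> lang G2"
  proof
    fix w :: "('a + 'a trip) list" assume "w \<in> map Inl ` lang_fin G W F"
    then obtain y where y: "w = map Inl (proj (Ts G) y)" "derives G [St G] y" "proj W y \<in> F"
      "proj (Ns G - W) y = []"
      unfolding lang_fin_def sentential_fin_def sentential_def by blast
    have "y \<in> lists (Vs G)" using derives_lists[OF cfgG y(2)] SV by auto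
    hence yT: "y \<in> lists (Ts G \<union> W)" using y(4) unfolding proj_def Ns_def
      by (auto simp: filter_empty_conv)
    have "rep F y (quot (proj W y) F) w" using rep_final[OF yT F_Q] y(1) by simp
    moreover have "[] \<in> quot (proj W y) F" using y(3) Nil_in_quot by auto
    ultimately have "derives G2 [Inr None] w" using complete[OF y(2)] by blast
    moreover have "w \<in> lists (Inl ` Ts G)" using y(1) by (auto simp: proj_def)
    ultimately show "w \<in> lang G2" unfolding lang_def Ts_G2 St_G2 by blast
  qed
qed

end


theorem lemma1:
  fixes G :: "'a grammar" and W :: "'a set" and F :: "'a list set"
  assumes "cfg G"
    and "W \<subseteq> Vs G"
    and "F \<subseteq> lists W"
    and "regular F"
  shows "context_free (lang_fin G W F)"
proof -
  obtain r where r: "rlang r = F" using assms(4) unfolding regular_def by blast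
  have fq: "finite (range (\<lambda>u. quot u F))" using finite_quot[of r] r by simp
  interpret fin_ctx G W F using assms(1) fq by unfold_locales
  show ?thesis
  proof (rule cf_from)
    show "cfg G2" by (rule cfg_G2)
    show "Ts G2 \<subseteq> range Inl" unfolding Ts_G2 by auto
    show "lang G2 = map Inl ` lang_fin G W F" by (rule lang_G2)
  qed
qed

end
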